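(* (1) For every finitely complete category $\mathbb E$, any internal unitary magma in $\mathbb E$ that carries an internal opimplicative subtraction structure in the category of internal unitary magmas is isomorphic to the terminal object; the same holds for internal implicative opsubtractions. (2) If $X$ is a topological space with a continuous binary operation $s$ and a point $0$ satisfying the opimplicative subtraction identities (resp. the implicative opsubtraction identities), then $\pi_1(X,0)$ is trivial. (3) If $X$ is a topological space with a continuous ternary operation $p$ satisfying $p(x,y,y)=x=p(y,y,x)$ and the Pixley identity $p(x,y,x)=x$, then $\pi_1(X,x_0)$ is trivial for every point $x_0\in X$.
   Context: An opimplicative subtraction is a set with a binary operation $s$ and a constant $0$ such that $s(x,x)=0$, $s(x,0)=x$ and $s(0,x)=0$. An implicative opsubtraction is a set with a binary operation $s$ and constant $0$ such that $s(x,x)=0$, $s(0,x)=x$ and $s(x,0)=0$. A unitary magma is a set with binary operation $*$ and constant $1$ with $x*1=x=1*x$. Internal structures in a finitely complete category are defined diagrammatically via finite products. *)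

theory Defs
  imports "HOL-Analysis.Analysis"
begin

record ('o, 'm) cat =
  Obj  :: "'o set"
  Arr  :: "'m set"
  Dom  :: "'m \<Rightarrow> 'o"
  Cod  :: "'m \<Rightarrow> 'o"
  Id   :: "'o \<Rightarrow> 'm"
  Comp :: "'m \<Rightarrow> 'm \<Rightarrow> 'm"   (* Comp C g f = g o f *)

definition hom :: "('o, 'm) cat \<Rightarrow> 'o \<Rightarrow> 'o \<Rightarrow> 'm set" where
  "hom C a b = {f \<in> Arr C. Dom C f = a \<and> Cod C f = b}"

definition is_category :: "('o, 'm) cat \<Rightarrow> bool" where
  "is_category C \<longleftrightarrow>
     (\<forall>f \<in> Arr C. Dom C f \<in> Obj C \<and> Cod C f \<in> Obj C) \<and>
     (\<forall>a \<in> Obj C. Id C a \<in> hom C a a) \<and>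
     (\<forall>f \<in> Arr C. \<forall>g \<in> Arr C. Cod C f = Dom C g \<longrightarrow>
         Comp C g f \<in> hom C (Dom C f) (Cod C g)) \<and>
     (\<forall>f \<in> Arr C. Comp C f (Id C (Dom C f)) = f \<and> Comp C (Id C (Cod C f)) f = f) \<and>
     (\<forall>f \<in> Arr C. \<forall>g \<in> Arr C. \<forall>h \<in> Arr C. Cod C f = Dom C g \<and> Cod C g = Dom C h \<longrightarrow>
         Comp C h (Comp C g f) = Comp C (Comp C h g) f)"

definition is_terminal :: "('o, 'm) cat \<Rightarrow> 'o \<Rightarrow> bool" where
  "is_terminal C t \<longleftrightarrow> t \<in> Obj C \<and> (\<forall>a \<in> Obj C. \<exists>!f. f \<in> hom C a t)"

definition is_product :: "('o, 'm) cat \<Rightarrow> 'o \<Rightarrow> 'o \<Rightarrow> 'o \<Rightarrow> 'm \<Rightarrow> 'm \<Rightarrow> bool" where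
  "is_product C a b p p1 p2 \<longleftrightarrow>
     p \<in> Obj C \<and> p1 \<in> hom C p a \<and> p2 \<in> hom C p b \<and>
     (\<forall>c \<in> Obj C. \<forall>f \<in> hom C c a. \<forall>g \<in> hom C c b.
        \<exists>!h. h \<in> hom C c p \<and> Comp C p1 h = f \<and> Comp C p2 h = g)"

definition is_equalizer :: "('o, 'm) cat \<Rightarrow> 'm \<Rightarrow> 'm \<Rightarrow> 'm \<Rightarrow> bool" where
  "is_equalizer C f g e \<longleftrightarrow>
     e \<in> hom C (Dom C e) (Dom C f) \<and> Comp C f e = Comp C g e \<and>
     (\<forall>x \<in> Arr C. Cod C x = Dom C f \<and> Comp C f x = Comp C g x \<longrightarrow>
        (\<exists>!u. u \<in> hom C (Dom C x) (Dom C e) \<and> Comp C e u = x))"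

definition finitely_complete :: "('o, 'm) cat \<Rightarrow> bool" where
  "finitely_complete C \<longleftrightarrow> is_category C \<and>
     (\<exists>t. is_terminal C t) \<and>
     (\<forall>a \<in> Obj C. \<forall>b \<in> Obj C. \<exists>p p1 p2. is_product C a b p p1 p2) \<and>
     (\<forall>a \<in> Obj C. \<forall>b \<in> Obj C. \<forall>f \<in> hom C a b. \<forall>g \<in> hom C a b. \<exists>e. is_equalizer C f g e)"

definition is_iso_obj :: "('o, 'm) cat \<Rightarrow> 'o \<Rightarrow> 'o \<Rightarrow> bool" where
  "is_iso_obj C a b \<longleftrightarrow> (\<exists>f g. f \<in> hom C a b \<and> g \<in> hom C b a \<and>
      Comp C g f = Id C a \<and> Comp C f g = Id C b)"

definition term_obj :: "('o, 'm) cat \<Rightarrow> 'o" where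
  "term_obj C = (SOME t. is_terminal C t)"

definition bang :: "('o, 'm) cat \<Rightarrow> 'o \<Rightarrow> 'm" where
  "bang C a = (THE f. f \<in> hom C a (term_obj C))"

definition prod_data :: "('o, 'm) cat \<Rightarrow> 'o \<Rightarrow> 'o \<Rightarrow> 'o \<times> 'm \<times> 'm" where
  "prod_data C a b = (SOME (p, p1, p2). is_product C a b p p1 p2)"

definition pobj :: "('o, 'm) cat \<Rightarrow> 'o \<Rightarrow> 'o \<Rightarrow> 'o" where
  "pobj C a b = fst (prod_data C a b)"

definition pr1 :: "('o, 'm) cat \<Rightarrow> 'o \<Rightarrow> 'o \<Rightarrow> 'm" where
  "pr1 C a b = fst (snd (prod_data C a b))"

definition pr2 :: "('o, 'm) cat \<Rightarrow> 'o \<Rightarrow> 'o \<Rightarrow> 'm" where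
  "pr2 C a b = snd (snd (prod_data C a b))"

definition pair :: "('o, 'm) cat \<Rightarrow> 'o \<Rightarrow> 'o \<Rightarrow> 'm \<Rightarrow> 'm \<Rightarrow> 'm" where
  "pair C a b f g = (THE h. h \<in> hom C (Dom C f) (pobj C a b) \<and>
                             Comp C (pr1 C a b) h = f \<and> Comp C (pr2 C a b) h = g)"

definition int_unitary_magma :: "('o, 'm) cat \<Rightarrow> 'o \<Rightarrow> 'm \<Rightarrow> 'm \<Rightarrow> bool" where
  "int_unitary_magma C M mu e \<longleftrightarrow>
     M \<in> Obj C \<and> mu \<in> hom C (pobj C M M) M \<and> e \<in> hom C (term_obj C) M \<and>
     Comp C mu (pair C M M (Id C M) (Comp C e (bang C M))) = Id C M \<and>
     Comp C mu (pair C M M (Comp C e (bang C M)) (Id C M)) = Id C M"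

text \<open>Multiplication of the product magma \<open>M \<times> M\<close> in the category of internal
  unitary magmas (products there are computed as in the underlying category):
  \<open>((x,y),(z,w)) \<mapsto> (x*z, y*w)\<close>.\<close>
definition prod_mult :: "('o, 'm) cat \<Rightarrow> 'o \<Rightarrow> 'm \<Rightarrow> 'm" where
  "prod_mult C M mu =
     (let P = pobj C M M; q1 = pr1 C P P; q2 = pr2 C P P;
          p1 = pr1 C M M; p2 = pr2 C M M
      in pair C M M
           (Comp C mu (pair C M M (Comp C p1 q1) (Comp C p1 q2)))
           (Comp C mu (pair C M M (Comp C p2 q1) (Comp C p2 q2))))"

definition prod_unit :: "('o, 'm) cat \<Rightarrow> 'o \<Rightarrow> 'm \<Rightarrow> 'm" where
  "prod_unit C M e = pair C M M e e"

definition binop_is_umagma_hom :: "('o, 'm) cat \<Rightarrow> 'o \<Rightarrow> 'm \<Rightarrow> 'm \<Rightarrow> 'm \<Rightarrow> bool" where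
  "binop_is_umagma_hom C M mu e s \<longleftrightarrow>
     (let P = pobj C M M in
       Comp C s (prod_mult C M mu) =
         Comp C mu (pair C M M (Comp C s (pr1 C P P)) (Comp C s (pr2 C P P))) \<and>
       Comp C s (prod_unit C M e) = e)"

text \<open>\<open>z : 1 \<rightarrow> M\<close> is a morphism of internal unitary magmas, where the terminal
  unitary magma is \<open>1\<close> with its unique structure.\<close>
definition const_is_umagma_hom :: "('o, 'm) cat \<Rightarrow> 'o \<Rightarrow> 'm \<Rightarrow> 'm \<Rightarrow> 'm \<Rightarrow> bool" where
  "const_is_umagma_hom C M mu e z \<longleftrightarrow>
     (let T = term_obj C in
       Comp C z (bang C (pobj C T T)) =
         Comp C mu (pair C M M (Comp C z (pr1 C T T)) (Comp C z (pr2 C T T))) \<and>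
       Comp C z (Id C T) = e)"

definition int_opimplicative_subtraction :: "('o, 'm) cat \<Rightarrow> 'o \<Rightarrow> 'm \<Rightarrow> 'm \<Rightarrow> bool" where
  "int_opimplicative_subtraction C M s z \<longleftrightarrow>
     M \<in> Obj C \<and> s \<in> hom C (pobj C M M) M \<and> z \<in> hom C (term_obj C) M \<and>
     Comp C s (pair C M M (Id C M) (Id C M)) = Comp C z (bang C M) \<and>
     Comp C s (pair C M M (Id C M) (Comp C z (bang C M))) = Id C M \<and>
     Comp C s (pair C M M (Comp C z (bang C M)) (Id C M)) = Comp C z (bang C M)"

definition int_implicative_opsubtraction :: "('o, 'm) cat \<Rightarrow> 'o \<Rightarrow> 'm \<Rightarrow> 'm \<Rightarrow> bool" where
  "int_implicative_opsubtraction C M s z \<longleftrightarrow>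
     M \<in> Obj C \<and> s \<in> hom C (pobj C M M) M \<and> z \<in> hom C (term_obj C) M \<and>
     Comp C s (pair C M M (Id C M) (Id C M)) = Comp C z (bang C M) \<and>
     Comp C s (pair C M M (Comp C z (bang C M)) (Id C M)) = Id C M \<and>
     Comp C s (pair C M M (Id C M) (Comp C z (bang C M))) = Comp C z (bang C M)"

text \<open>An internal opimplicative subtraction in the category of internal unitary
  magmas on \<open>(M,mu,e)\<close>: the structure maps are magma morphisms and satisfy the
  identities (checked in the underlying category, since the forgetful functor
  preserves finite products and is faithful).\<close>
definition opimp_subtraction_in_UMag :: "('o, 'm) cat \<Rightarrow> 'o \<Rightarrow> 'm \<Rightarrow> 'm \<Rightarrow> 'm \<Rightarrow> 'm \<Rightarrow> bool" where
  "opimp_subtraction_in_UMag C M mu e s z \<longleftrightarrow>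
     int_unitary_magma C M mu e \<and> int_opimplicative_subtraction C M s z \<and>
     binop_is_umagma_hom C M mu e s \<and> const_is_umagma_hom C M mu e z"

definition imp_opsubtraction_in_UMag :: "('o, 'm) cat \<Rightarrow> 'o \<Rightarrow> 'm \<Rightarrow> 'm \<Rightarrow> 'm \<Rightarrow> 'm \<Rightarrow> bool" where
  "imp_opsubtraction_in_UMag C M mu e s z \<longleftrightarrow>
     int_unitary_magma C M mu e \<and> int_implicative_opsubtraction C M s z \<and>
     binop_is_umagma_hom C M mu e s \<and> const_is_umagma_hom C M mu e z"

definition trivial_pi1 :: "'a topology \<Rightarrow> 'a \<Rightarrow> bool" where
  "trivial_pi1 X x0 \<longleftrightarrow>
     (\<forall>p. pathin X p \<and> p 0 = x0 \<and> p 1 = x0 \<longrightarrow>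
        homotopic_with (\<lambda>q. q 0 = x0 \<and> q 1 = x0) (top_of_set {0..1}) X p (\<lambda>_. x0))"

end

theory Submission
  imports Defs
begin


lemma loop_lemma:
  fixes X :: "'a topology"
  assumes cont: "continuous_map (prod_topology X X) X (\<lambda>(x, y). G x y)"
    and x0: "x0 \<in> topspace X"
    and eqs: "\<forall>a\<in>topspace X. G a x0 = a \<and> G a a = x0 \<and> G x0 a = x0"
  shows "trivial_pi1 X x0"
  unfolding trivial_pi1_def
proof (intro allI impI, elim conjE)
  fix p assume pp: "pathin X p" and p0: "p 0 = x0" and p1: "p 1 = x0"
  have pc: "continuous_map (top_of_set {0..1}) X p" using pp by (simp add: pathin_def)
  have pin: "p t \<in> topspace X" if "t \<in> {0..1}" for t
    using pc that by (auto simp: continuous_map_def)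
  define h where "h = (\<lambda>(u::real,t::real). if t \<in> {0..1} then G (p t) (p (u*t)) else if u = 0 then p t else x0)"
  have m: "continuous_map (top_of_set ({0..1::real}\<times>{0..1::real})) (top_of_set {0..1::real}) (\<lambda>ut. fst ut * snd ut)"
    by (auto simp: mult_le_one intro!: continuous_intros)
  have sn: "continuous_map (top_of_set ({0..1::real}\<times>{0..1::real})) (top_of_set {0..1::real}) snd"
    by (auto intro!: continuous_intros)
  have c1: "continuous_map (top_of_set ({0..1::real}\<times>{0..1::real})) (prod_topology X X)
             (\<lambda>ut. (p (snd ut), p (fst ut * snd ut)))"
  proof (intro continuous_map_pairedI)
    show "continuous_map (top_of_set ({0..1::real}\<times>{0..1::real})) X (\<lambda>ut. p (snd ut))"
      using continuous_map_compose[OF sn pc] by (simp add: o_def)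
    show "continuous_map (top_of_set ({0..1::real}\<times>{0..1::real})) X (\<lambda>ut. p (fst ut * snd ut))"
      using continuous_map_compose[OF m pc] by (simp add: o_def)
  qed
  have c2: "continuous_map (prod_topology (top_of_set {0..1::real}) (top_of_set {0..1::real})) X
             (\<lambda>ut. G (p (snd ut)) (p (fst ut * snd ut)))"
    using continuous_map_compose[OF c1 cont] by (simp add: o_def case_prod_unfold)
  have c3: "continuous_map (prod_topology (top_of_set {0..1::real}) (top_of_set {0..1::real})) X h"
    apply (rule continuous_map_eq[OF c2])
    by (auto simp: h_def)
  show "homotopic_with (\<lambda>q. q 0 = x0 \<and> q 1 = x0) (top_of_set {0..1}) X p (\<lambda>_. x0)"
    unfolding homotopic_with_def
  proof (intro exI conjI allI ballI)
    show "continuous_map (prod_topology (top_of_set {0..1}) (top_of_set {0..1})) X h" by (rule c3)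
    fix x :: real
    show "h (0, x) = p x" using eqs pin p0 by (auto simp: h_def)
    show "h (1, x) = x0" using eqs pin p0 by (auto simp: h_def)
  next
    fix t :: real assume t: "t \<in> {0..1}"
    show "h (t, 0) = x0" using eqs x0 p0 by (auto simp: h_def)
    show "h (t, 1) = x0" using eqs pin[OF t] p1 by (auto simp: h_def)
  qed
qed


context
  fixes C :: "('o,'m) cat"
  assumes fc: "finitely_complete C"
begin

lemma cat: "is_category C" using fc by (simp add: finitely_complete_def)

lemma hom_objs: "f \<in> hom C a b \<Longrightarrow> a \<in> Obj C \<and> b \<in> Obj C"
  using cat by (auto simp: is_category_def hom_def)

lemma comp_hom: "f \<in> hom C a b \<Longrightarrow> g \<in> hom C b c \<Longrightarrow> Comp C g f \<in> hom C a c"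
  using cat unfolding is_category_def hom_def by auto

lemma id_hom: "a \<in> Obj C \<Longrightarrow> Id C a \<in> hom C a a"
  using cat unfolding is_category_def by auto

lemma comp_id_r: "f \<in> hom C a b \<Longrightarrow> Comp C f (Id C a) = f"
  using cat unfolding is_category_def hom_def by auto

lemma comp_id_l: "f \<in> hom C a b \<Longrightarrow> Comp C (Id C b) f = f"
  using cat unfolding is_category_def hom_def by auto

lemma assoc: "f \<in> hom C a b \<Longrightarrow> g \<in> hom C b c \<Longrightarrow> h \<in> hom C c d \<Longrightarrow>
   Comp C h (Comp C g f) = Comp C (Comp C h g) f"
  using cat unfolding is_category_def hom_def by auto

lemma term_ok: "is_terminal C (term_obj C)"
  using fc unfolding finitely_complete_def term_obj_def by (metis someI_ex)

lemma term_obj: "term_obj C \<in> Obj C" using term_ok by (simp add: is_terminal_def)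

lemma bang_hom: "a \<in> Obj C \<Longrightarrow> bang C a \<in> hom C a (term_obj C)"
  using term_ok unfolding is_terminal_def bang_def by (metis theI')

lemma bang_unique: "f \<in> hom C a (term_obj C) \<Longrightarrow> f = bang C a"
  using term_ok bang_hom hom_objs unfolding is_terminal_def by metis

lemma prod: "a \<in> Obj C \<Longrightarrow> b \<in> Obj C \<Longrightarrow> is_product C a b (pobj C a b) (pr1 C a b) (pr2 C a b)"
proof -
  assume "a \<in> Obj C" "b \<in> Obj C"
  then have "\<exists>x. (case x of (p, p1, p2) \<Rightarrow> is_product C a b p p1 p2)"
    using fc unfolding finitely_complete_def by auto
  then have "case prod_data C a b of (p, p1, p2) \<Rightarrow> is_product C a b p p1 p2"
    unfolding prod_data_def by (rule someI_ex)
  then show ?thesis unfolding pobj_def pr1_def pr2_def by (auto split: prod.splits)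
qed

lemma pobj_obj: "a \<in> Obj C \<Longrightarrow> b \<in> Obj C \<Longrightarrow> pobj C a b \<in> Obj C"
  using prod by (simp add: is_product_def)
lemma pr1_hom: "a \<in> Obj C \<Longrightarrow> b \<in> Obj C \<Longrightarrow> pr1 C a b \<in> hom C (pobj C a b) a"
  using prod by (simp add: is_product_def)
lemma pr2_hom: "a \<in> Obj C \<Longrightarrow> b \<in> Obj C \<Longrightarrow> pr2 C a b \<in> hom C (pobj C a b) b"
  using prod by (simp add: is_product_def)

lemma pair_props:
  assumes f: "f \<in> hom C c a" and g: "g \<in> hom C c b"
  shows "pair C a b f g \<in> hom C c (pobj C a b) \<and> Comp C (pr1 C a b) (pair C a b f g) = f
      \<and> Comp C (pr2 C a b) (pair C a b f g) = g"
proof -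
  have ob: "a \<in> Obj C" "b \<in> Obj C" "c \<in> Obj C" using hom_objs f g by auto
  have d: "Dom C f = c" using f by (simp add: hom_def)
  have "\<exists>!h. h \<in> hom C c (pobj C a b) \<and> Comp C (pr1 C a b) h = f \<and> Comp C (pr2 C a b) h = g"
    using prod[OF ob(1,2)] ob f g unfolding is_product_def by blast
  then show ?thesis unfolding pair_def d by (rule theI')
qed

lemma pair_hom: "f \<in> hom C c a \<Longrightarrow> g \<in> hom C c b \<Longrightarrow> pair C a b f g \<in> hom C c (pobj C a b)"
  using pair_props by blast
lemma pr1_pair: "f \<in> hom C c a \<Longrightarrow> g \<in> hom C c b \<Longrightarrow> Comp C (pr1 C a b) (pair C a b f g) = f"
  using pair_props by blast
lemma pr2_pair: "f \<in> hom C c a \<Longrightarrow> g \<in> hom C c b \<Longrightarrow> Comp C (pr2 C a b) (pair C a b f g) = g"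
  using pair_props by blast

lemma pair_unique:
  assumes f: "f \<in> hom C c a" and g: "g \<in> hom C c b" and h: "h \<in> hom C c (pobj C a b)"
    and h1: "Comp C (pr1 C a b) h = f" and h2: "Comp C (pr2 C a b) h = g"
  shows "pair C a b f g = h"
proof -
  have ob: "a \<in> Obj C" "b \<in> Obj C" "c \<in> Obj C" using hom_objs f g by auto
  have "\<exists>!h. h \<in> hom C c (pobj C a b) \<and> Comp C (pr1 C a b) h = f \<and> Comp C (pr2 C a b) h = g"
    using prod[OF ob(1,2)] ob f g unfolding is_product_def by blast
  then show ?thesis using pair_props[OF f g] h h1 h2 by blast
qed

lemma pair_comp:
  assumes f: "f \<in> hom C c a" and g: "g \<in> hom C c b" and k: "k \<in> hom C d c"
  shows "Comp C (pair C a b f g) k = pair C a b (Comp C f k) (Comp C g k)"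
proof -
  have ob: "a \<in> Obj C" "b \<in> Obj C" using hom_objs f g by auto
  show ?thesis
    apply (rule sym, rule pair_unique)
    using comp_hom[OF k f] comp_hom[OF k g] comp_hom[OF k pair_hom[OF f g]]
      assoc[OF k pair_hom[OF f g] pr1_hom[OF ob]] assoc[OF k pair_hom[OF f g] pr2_hom[OF ob]]
      pr1_pair[OF f g] pr2_pair[OF f g] by auto
qed

lemma core:
  assumes um: "int_unitary_magma C M mu e"
    and sh: "binop_is_umagma_hom C M mu e s"
    and sM: "s \<in> hom C (pobj C M M) M"
    and key: "Comp C mu (pair C M M (Comp C s (pair C M M (Id C M) (Comp C e (bang C M))))
                                    (Comp C s (pair C M M (Comp C e (bang C M)) (Id C M)))) = Id C M"
  shows "Comp C s (pair C M M (Id C M) (Id C M)) = Id C M"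
proof -
  let ?T = "term_obj C"
  let ?E = "Comp C e (bang C M)"
  let ?P = "pobj C M M"
  let ?p1 = "pr1 C M M" and ?p2 = "pr2 C M M" and ?q1 = "pr1 C ?P ?P" and ?q2 = "pr2 C ?P ?P"
  have M: "M \<in> Obj C" and mu: "mu \<in> hom C ?P M" and e: "e \<in> hom C ?T M"
    and u1: "Comp C mu (pair C M M (Id C M) ?E) = Id C M"
    and u2: "Comp C mu (pair C M M ?E (Id C M)) = Id C M"
    using um unfolding int_unitary_magma_def by auto
  have P: "?P \<in> Obj C" using pobj_obj[OF M M] .
  have idM: "Id C M \<in> hom C M M" using id_hom[OF M] .
  have E: "?E \<in> hom C M M" using comp_hom[OF bang_hom[OF M] e] .
  have p1: "?p1 \<in> hom C ?P M" and p2: "?p2 \<in> hom C ?P M" using pr1_hom[OF M M] pr2_hom[OF M M] by auto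
  have q1: "?q1 \<in> hom C (pobj C ?P ?P) ?P" and q2: "?q2 \<in> hom C (pobj C ?P ?P) ?P"
    using pr1_hom[OF P P] pr2_hom[OF P P] by auto
  define a where "a = pair C M M (Id C M) ?E"
  define b where "b = pair C M M ?E (Id C M)"
  have a: "a \<in> hom C M ?P" and b: "b \<in> hom C M ?P" unfolding a_def b_def using pair_hom idM E by auto
  define k where "k = pair C ?P ?P a b"
  have k: "k \<in> hom C M (pobj C ?P ?P)" unfolding k_def using pair_hom[OF a b] .
  have qk1: "Comp C ?q1 k = a" and qk2: "Comp C ?q2 k = b" unfolding k_def using pr1_pair[OF a b] pr2_pair[OF a b] by auto
  have pa1: "Comp C ?p1 a = Id C M" and pa2: "Comp C ?p2 a = ?E"
    unfolding a_def using pr1_pair[OF idM E] pr2_pair[OF idM E] by auto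
  have pb1: "Comp C ?p1 b = ?E" and pb2: "Comp C ?p2 b = Id C M"
    unfolding b_def using pr1_pair[OF E idM] pr2_pair[OF E idM] by auto
  have r11: "Comp C (Comp C ?p1 ?q1) k = Id C M" using assoc[OF k q1 p1] qk1 pa1 by simp
  have r12: "Comp C (Comp C ?p1 ?q2) k = ?E" using assoc[OF k q2 p1] qk2 pb1 by simp
  have r21: "Comp C (Comp C ?p2 ?q1) k = ?E" using assoc[OF k q1 p2] qk1 pa2 by simp
  have r22: "Comp C (Comp C ?p2 ?q2) k = Id C M" using assoc[OF k q2 p2] qk2 pb2 by simp
  have h11: "Comp C ?p1 ?q1 \<in> hom C (pobj C ?P ?P) M" using comp_hom[OF q1 p1] .
  have h12: "Comp C ?p1 ?q2 \<in> hom C (pobj C ?P ?P) M" using comp_hom[OF q2 p1] .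
  have h21: "Comp C ?p2 ?q1 \<in> hom C (pobj C ?P ?P) M" using comp_hom[OF q1 p2] .
  have h22: "Comp C ?p2 ?q2 \<in> hom C (pobj C ?P ?P) M" using comp_hom[OF q2 p2] .
  define A where "A = pair C M M (Comp C ?p1 ?q1) (Comp C ?p1 ?q2)"
  define B where "B = pair C M M (Comp C ?p2 ?q1) (Comp C ?p2 ?q2)"
  have A: "A \<in> hom C (pobj C ?P ?P) ?P" unfolding A_def using pair_hom[OF h11 h12] .
  have B: "B \<in> hom C (pobj C ?P ?P) ?P" unfolding B_def using pair_hom[OF h21 h22] .
  have Ak: "Comp C A k = a" unfolding A_def a_def using pair_comp[OF h11 h12 k] r11 r12 by simp
  have Bk: "Comp C B k = b" unfolding B_def b_def using pair_comp[OF h21 h22 k] r21 r22 by simp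
  have muA: "Comp C mu A \<in> hom C (pobj C ?P ?P) M" using comp_hom[OF A mu] .
  have muB: "Comp C mu B \<in> hom C (pobj C ?P ?P) M" using comp_hom[OF B mu] .
  have pm: "prod_mult C M mu = pair C M M (Comp C mu A) (Comp C mu B)"
    unfolding prod_mult_def A_def B_def Let_def by simp
  have pmh: "prod_mult C M mu \<in> hom C (pobj C ?P ?P) ?P" using pm pair_hom[OF muA muB] by simp
  have pmk: "Comp C (prod_mult C M mu) k = pair C M M (Id C M) (Id C M)"
    unfolding pm using pair_comp[OF muA muB k] assoc[OF k A mu] assoc[OF k B mu] Ak Bk u1 u2
    unfolding a_def b_def by simp
  have sq1: "Comp C s ?q1 \<in> hom C (pobj C ?P ?P) M" using comp_hom[OF q1 sM] .
  have sq2: "Comp C s ?q2 \<in> hom C (pobj C ?P ?P) M" using comp_hom[OF q2 sM] .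
  have hs: "Comp C s (prod_mult C M mu) = Comp C mu (pair C M M (Comp C s ?q1) (Comp C s ?q2))"
    using sh unfolding binop_is_umagma_hom_def Let_def by simp
  have "Comp C s (pair C M M (Id C M) (Id C M)) = Comp C (Comp C s (prod_mult C M mu)) k"
    using assoc[OF k pmh sM] pmk by simp
  also have "\<dots> = Comp C mu (Comp C (pair C M M (Comp C s ?q1) (Comp C s ?q2)) k)"
    unfolding hs using assoc[OF k pair_hom[OF sq1 sq2] mu] by simp
  also have "\<dots> = Comp C mu (pair C M M (Comp C s a) (Comp C s b))"
    using pair_comp[OF sq1 sq2 k] assoc[OF k q1 sM] assoc[OF k q2 sM] qk1 qk2 by simp
  also have "\<dots> = Id C M" using key unfolding a_def b_def .
  finally show ?thesis .
qed

lemma final: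
  assumes um: "int_unitary_magma C M mu e"
    and z: "z \<in> hom C (term_obj C) M"
    and cz: "const_is_umagma_hom C M mu e z"
    and s1: "Comp C s (pair C M M (Id C M) (Id C M)) = Comp C z (bang C M)"
    and s2: "Comp C s (pair C M M (Id C M) (Id C M)) = Id C M"
  shows "is_iso_obj C M (term_obj C)"
proof -
  have M: "M \<in> Obj C" and e: "e \<in> hom C (term_obj C) M" using um unfolding int_unitary_magma_def by auto
  have "z = e" using cz comp_id_r[OF z] unfolding const_is_umagma_hom_def Let_def by simp
  have bM: "bang C M \<in> hom C M (term_obj C)" using bang_hom[OF M] .
  have 1: "Comp C e (bang C M) = Id C M" using s1 s2 \<open>z = e\<close> by simp
  have "Comp C (bang C M) e \<in> hom C (term_obj C) (term_obj C)" using comp_hom[OF e bM] .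
  moreover have "Id C (term_obj C) \<in> hom C (term_obj C) (term_obj C)" using id_hom[OF term_obj] .
  ultimately have 2: "Comp C (bang C M) e = Id C (term_obj C)" using bang_unique by metis
  show ?thesis unfolding is_iso_obj_def using bM e 1 2 by blast
qed

end

lemma part1:
  assumes "finitely_complete C" "opimp_subtraction_in_UMag C M mu e s z"
  shows "is_iso_obj C M (term_obj C)"
proof -
  have um: "int_unitary_magma C M mu e" and os: "int_opimplicative_subtraction C M s z"
    and sh: "binop_is_umagma_hom C M mu e s" and cz: "const_is_umagma_hom C M mu e z"
    using assms(2) unfolding opimp_subtraction_in_UMag_def by auto
  have z: "z \<in> hom C (term_obj C) M" and sM: "s \<in> hom C (pobj C M M) M" using os
    unfolding int_opimplicative_subtraction_def by auto
  have "z = e" using cz comp_id_r[OF assms(1) z] unfolding const_is_umagma_hom_def Let_def by simp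
  have key: "Comp C mu (pair C M M (Comp C s (pair C M M (Id C M) (Comp C e (bang C M))))
                                    (Comp C s (pair C M M (Comp C e (bang C M)) (Id C M)))) = Id C M"
    using os um \<open>z = e\<close> unfolding int_opimplicative_subtraction_def int_unitary_magma_def by simp
  show ?thesis
    apply (rule final[OF assms(1) um z cz, of s])
    using os unfolding int_opimplicative_subtraction_def apply simp
    by (rule core[OF assms(1) um sh sM key])
qed

lemma part2:
  assumes "finitely_complete C" "imp_opsubtraction_in_UMag C M mu e s z"
  shows "is_iso_obj C M (term_obj C)"
proof -
  have um: "int_unitary_magma C M mu e" and os: "int_implicative_opsubtraction C M s z"
    and sh: "binop_is_umagma_hom C M mu e s" and cz: "const_is_umagma_hom C M mu e z"
    using assms(2) unfolding imp_opsubtraction_in_UMag_def by auto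
  have z: "z \<in> hom C (term_obj C) M" and sM: "s \<in> hom C (pobj C M M) M" using os
    unfolding int_implicative_opsubtraction_def by auto
  have "z = e" using cz comp_id_r[OF assms(1) z] unfolding const_is_umagma_hom_def Let_def by simp
  have key: "Comp C mu (pair C M M (Comp C s (pair C M M (Id C M) (Comp C e (bang C M))))
                                    (Comp C s (pair C M M (Comp C e (bang C M)) (Id C M)))) = Id C M"
    using os um \<open>z = e\<close> unfolding int_implicative_opsubtraction_def int_unitary_magma_def by simp
  show ?thesis
    apply (rule final[OF assms(1) um z cz, of s])
    using os unfolding int_implicative_opsubtraction_def apply simp
    by (rule core[OF assms(1) um sh sM key])
qed


theorem mainTheorem16:
  shows "(\<forall>(C :: ('o, 'm) cat) M mu e s z.
            finitely_complete C \<and> opimp_subtraction_in_UMag C M mu e s z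
              \<longrightarrow> is_iso_obj C M (term_obj C)) \<and>
         (\<forall>(C :: ('o, 'm) cat) M mu e s z.
            finitely_complete C \<and> imp_opsubtraction_in_UMag C M mu e s z
              \<longrightarrow> is_iso_obj C M (term_obj C)) \<and>
         (\<forall>(X :: 'a topology) s z.
            continuous_map (prod_topology X X) X (\<lambda>(x, y). s x y) \<and> z \<in> topspace X \<and>
            (\<forall>x \<in> topspace X. s x x = z \<and> s x z = x \<and> s z x = z)
              \<longrightarrow> trivial_pi1 X z) \<and>
         (\<forall>(X :: 'a topology) s z.
            continuous_map (prod_topology X X) X (\<lambda>(x, y). s x y) \<and> z \<in> topspace X \<and>
            (\<forall>x \<in> topspace X. s x x = z \<and> s z x = x \<and> s x z = z)
              \<longrightarrow> trivial_pi1 X z) \<and>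
         (\<forall>(X :: 'b topology) p.
            continuous_map (prod_topology X (prod_topology X X)) X (\<lambda>(x, y, w). p x y w) \<and>
            (\<forall>x \<in> topspace X. \<forall>y \<in> topspace X. p x y y = x \<and> p y y x = x \<and> p x y x = x)
              \<longrightarrow> (\<forall>x0 \<in> topspace X. trivial_pi1 X x0))"
proof (intro conjI allI impI ballI)
  fix C :: "('o,'m) cat" and M mu e s z
  assume "finitely_complete C \<and> opimp_subtraction_in_UMag C M mu e s z"
  then show "is_iso_obj C M (term_obj C)" using part1 by metis
next
  fix C :: "('o,'m) cat" and M mu e s z
  assume "finitely_complete C \<and> imp_opsubtraction_in_UMag C M mu e s z"
  then show "is_iso_obj C M (term_obj C)" using part2 by metis
next
  fix X :: "'a topology" and s z
  assume h: "continuous_map (prod_topology X X) X (\<lambda>(x, y). s x y) \<and> z \<in> topspace X \<and>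
            (\<forall>x \<in> topspace X. s x x = z \<and> s x z = x \<and> s z x = z)"
  show "trivial_pi1 X z" by (rule loop_lemma[of X s z]) (use h in auto)
next
  fix X :: "'a topology" and s z
  assume h: "continuous_map (prod_topology X X) X (\<lambda>(x, y). s x y) \<and> z \<in> topspace X \<and>
            (\<forall>x \<in> topspace X. s x x = z \<and> s z x = x \<and> s x z = z)"
  have "continuous_map (prod_topology X X) X (\<lambda>(x, y). s y x)"
    using continuous_map_compose[OF continuous_map_pairedI[OF continuous_map_snd continuous_map_fst], of X X X "\<lambda>(x, y). s x y"] h
    by (simp add: o_def case_prod_unfold)
  then show "trivial_pi1 X z" by (rule loop_lemma[of X "\<lambda>x y. s y x" z]) (use h in auto)
next
  fix X :: "'b topology" and p x0
  assume h: "continuous_map (prod_topology X (prod_topology X X)) X (\<lambda>(x, y, w). p x y w) \<and>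
            (\<forall>x \<in> topspace X. \<forall>y \<in> topspace X. p x y y = x \<and> p y y x = x \<and> p x y x = x)"
    and x0: "x0 \<in> topspace X"
  have c: "continuous_map (prod_topology X X) (prod_topology X (prod_topology X X)) (\<lambda>xy. (fst xy, (snd xy, x0)))"
    using x0 by (intro continuous_intros) auto
  have "continuous_map (prod_topology X X) X (\<lambda>(x, y). p x y x0)"
    using continuous_map_compose[OF c, of X "\<lambda>(x, y, w). p x y w"] h
    by (simp add: o_def case_prod_unfold)
  then show "trivial_pi1 X x0" by (rule loop_lemma[of X "\<lambda>x y. p x y x0" x0]) (use h x0 in auto)
qed

end
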